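(* Let $p,p'\in\mathbb{N}$ and let $Q,Q'$ be λ-terms. If $\lambda y.Q\in\mathcal{E}_p$ and $BT(Q)\le^\eta_{p'}BT(Q')$, then $\lambda y.Q'\in\mathcal{E}_{p+p'}$.
   Context: $\mathtt{I}=\lambda x.x$; $\mathcal{E}$ is the set of λ-terms $Q$ with $Q\twoheadrightarrow_{\beta\eta}\mathtt{I}$. Size on β-normal forms: $|Q|=0$ if $Q\twoheadrightarrow_\beta\mathtt{I}$, and $|Q|=\max\{m,\max_{i\le m}|\lambda z_i.Q_i|+1\}$ if $Q\twoheadrightarrow_\beta\lambda yz_1\dots z_m.yQ_1\cdots Q_m$; $\mathcal{E}_p=\{Q\in\mathcal{E}:|Q|<p\}$. Böhm-like trees: coinductively generated by $U::=\bot\mid\lambda x_1\dots x_n.yU_1\cdots U_k$. The relation $\le^\eta_p$ is the greatest relation on Böhm-like trees such that $U\le^\eta_pV$ implies either $U=V=\bot$, or $U=\lambda\vec x.yU_1\cdots U_k$ and $V=\lambda\vec xz_1\dots z_m.yV_1\cdots V_kQ_1\cdots Q_m$ with $m\le p$, the $z_\ell$ not free in $yU_1\cdots U_kV_1\cdots V_k$, each $Q_i$ the Böhm tree of a term $Q'_i$ with $\lambda z_i.Q'_i\in\mathcal{E}_p$, and $U_j\le^\eta_pV_j$ for all $j\le k$. *)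

theory Defs
  imports Main
begin

datatype lterm = Var nat | App lterm lterm | Abs lterm

fun rename :: "(nat \<Rightarrow> nat) \<Rightarrow> lterm \<Rightarrow> lterm" where
  "rename f (Var k) = Var (f k)"
| "rename f (App s t) = App (rename f s) (rename f t)"
| "rename f (Abs t) = Abs (rename (\<lambda>k. case k of 0 \<Rightarrow> 0 | Suc k' \<Rightarrow> Suc (f k')) t)"

definition lift :: "lterm \<Rightarrow> lterm" where
  "lift t = rename Suc t"

fun subst :: "lterm \<Rightarrow> nat \<Rightarrow> lterm \<Rightarrow> lterm" where
  "subst (Var i) k s = (if i < k then Var i else if i = k then s else Var (i - 1))"
| "subst (App t u) k s = App (subst t k s) (subst u k s)"
| "subst (Abs t) k s = Abs (subst t (Suc k) (lift s))"

inductive beta :: "lterm \<Rightarrow> lterm \<Rightarrow> bool" where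
  beta_redex: "beta (App (Abs t) s) (subst t 0 s)"
| beta_appL: "beta s s' \<Longrightarrow> beta (App s t) (App s' t)"
| beta_appR: "beta t t' \<Longrightarrow> beta (App s t) (App s t')"
| beta_abs: "beta t t' \<Longrightarrow> beta (Abs t) (Abs t')"

text \<open>eta: \<lambda>x. M x \<rightarrow> M with x not free in M (i.e. the body is a lifted term).\<close>
inductive eta :: "lterm \<Rightarrow> lterm \<Rightarrow> bool" where
  eta_redex: "eta (Abs (App (lift t) (Var 0))) t"
| eta_appL: "eta s s' \<Longrightarrow> eta (App s t) (App s' t)"
| eta_appR: "eta t t' \<Longrightarrow> eta (App s t) (App s t')"
| eta_abs: "eta t t' \<Longrightarrow> eta (Abs t) (Abs t')"

abbreviation beta_star :: "lterm \<Rightarrow> lterm \<Rightarrow> bool" where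
  "beta_star \<equiv> beta\<^sup>*\<^sup>*"

abbreviation betaeta_star :: "lterm \<Rightarrow> lterm \<Rightarrow> bool" where
  "betaeta_star \<equiv> (\<lambda>a b. beta a b \<or> eta a b)\<^sup>*\<^sup>*"

definition absn :: "nat \<Rightarrow> lterm \<Rightarrow> lterm" where
  "absn n t = (Abs ^^ n) t"

definition apps :: "lterm \<Rightarrow> lterm list \<Rightarrow> lterm" where
  "apps h ts = foldl App h ts"

definition Id_term :: lterm where
  "Id_term = Abs (Var 0)"

text \<open>abstract_var j M = \<lambda>z. M where z is the free variable with index j of M.\<close>
definition abstract_var :: "nat \<Rightarrow> lterm \<Rightarrow> lterm" where
  "abstract_var j M = Abs (rename (\<lambda>k. if k = j then 0 else Suc k) M)"

definition E :: "lterm set" where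
  "E = {Q. betaeta_star Q Id_term}"

text \<open>esize Q s: |Q| = s. Head y is the outermost binder (index m under m+1 binders);
  z_(i+1) has index m-1-i.\<close>
inductive esize :: "lterm \<Rightarrow> nat \<Rightarrow> bool" where
  esize_id: "beta_star Q Id_term \<Longrightarrow> esize Q 0"
| esize_exp: "beta_star Q (absn (Suc m) (apps (Var m) Qs)) \<Longrightarrow> length Qs = m \<Longrightarrow> length ss = m
    \<Longrightarrow> (\<forall>i<m. esize (abstract_var (m - 1 - i) (Qs ! i)) (ss ! i))
    \<Longrightarrow> esize Q (max m (Max (insert 0 (Suc ` set ss))))"

definition E_p :: "nat \<Rightarrow> lterm set" where
  "E_p p = {Q \<in> E. \<exists>s. esize Q s \<and> s < p}"

text \<open>Node n y Us = \<lambda>x1..xn. y U1 .. Uk (y a de Bruijn index under the n binders).\<close>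
codatatype bt = Bot | Node nat nat "bt list"

definition hnf_data :: "lterm \<Rightarrow> (nat \<times> nat \<times> lterm list) option" where
  "hnf_data Q = (if \<exists>n y Ms. beta_star Q (absn n (apps (Var y) Ms))
     then Some (SOME (n, y, Ms). beta_star Q (absn n (apps (Var y) Ms))) else None)"

primcorec BT :: "lterm \<Rightarrow> bt" where
  "BT Q = (case hnf_data Q of None \<Rightarrow> Bot
             | Some d \<Rightarrow> Node (fst d) (fst (snd d)) (map BT (snd (snd d))))"

primcorec shift_bt :: "nat \<Rightarrow> nat \<Rightarrow> bt \<Rightarrow> bt" where
  "shift_bt c d U = (case U of Bot \<Rightarrow> Bot
     | Node n y Us \<Rightarrow> Node n (if y < c + n then y else y + d) (map (shift_bt (c + n) d) Us))"

coinductive bt_le_eta :: "nat \<Rightarrow> bt \<Rightarrow> bt \<Rightarrow> bool" for p :: nat where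
  le_bot: "bt_le_eta p Bot Bot"
| le_node: "m \<le> p \<Longrightarrow> length Vs = length Us \<Longrightarrow> list_all2 (bt_le_eta p) Us Vs
    \<Longrightarrow> length Qs = m
    \<Longrightarrow> (\<forall>i<m. \<exists>Q'. Qs ! i = BT Q' \<and> abstract_var (m - 1 - i) Q' \<in> E_p p)
    \<Longrightarrow> bt_le_eta p (Node n y Us) (Node (n + m) (y + m) (map (shift_bt 0 m) Vs @ Qs))"

end

theory Submission
  imports Defs
begin

definition extn :: "nat \<Rightarrow> (nat \<Rightarrow> nat) \<Rightarrow> nat \<Rightarrow> nat" where
  "extn n f i = (if i < n then i else n + f (i - n))"
lemma ext_eq: "(\<lambda>k. case k of 0 \<Rightarrow> 0 | Suc k' \<Rightarrow> Suc (f k')) = extn 1 f"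
  by (auto simp: extn_def fun_eq_iff split: nat.split)
lemma rename_Abs'[simp]: "rename f (Abs t) = Abs (rename (extn 1 f) t)"
  by (simp add: ext_eq)
declare rename.simps(3)[simp del]
lemma extn_0[simp]: "extn 0 f = f" by (simp add: extn_def fun_eq_iff)
lemma extn_Suc: "extn 1 (extn n f) = extn (Suc n) f"
  by (auto simp: extn_def fun_eq_iff)
lemma extn_add: "extn m (extn n f) = extn (m + n) f"
  by (auto simp: extn_def fun_eq_iff)
lemma extn_comp: "extn n f \<circ> extn n g = extn n (f \<circ> g)"
  by (auto simp: extn_def fun_eq_iff)
lemma extn_id[simp]: "extn n id = id"
  by (auto simp: extn_def fun_eq_iff)
lemma extn_id'[simp]: "extn n (\<lambda>x. x) = (\<lambda>x. x)"
  by (auto simp: extn_def fun_eq_iff)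
lemma extn_inj: assumes "inj f" shows "inj (extn n f)"
proof (rule injI)
  fix x y assume "extn n f x = extn n f y"
  then have e: "(if x < n then x else n + f (x - n)) = (if y < n then y else n + f (y - n))"
    unfolding extn_def .
  show "x = y"
  proof (cases "x < n")
    case True
    then show ?thesis using e by (cases "y < n") auto
  next
    case False
    show ?thesis
    proof (cases "y < n")
      case True then show ?thesis using e False by auto
    next
      case F2: False
      then have "f (x - n) = f (y - n)" using e False by simp
      then have "x - n = y - n" by (rule injD[OF assms])
      then show ?thesis using False F2 by simp
    qed
  qed
qed
lemma rename_comp: "rename f (rename g t) = rename (f \<circ> g) t"
  by (induction t arbitrary: f g) (auto simp: extn_comp)

lemma rename_id[simp]: "rename id t = t"
  by (induction t) auto
lemma rename_id'[simp]: "rename (\<lambda>x. x) t = t"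
  using rename_id by (simp add: id_def)

definition up :: "(nat \<Rightarrow> lterm) \<Rightarrow> nat \<Rightarrow> lterm" where
  "up \<sigma> i = (case i of 0 \<Rightarrow> Var 0 | Suc j \<Rightarrow> lift (\<sigma> j))"

fun psubst :: "(nat \<Rightarrow> lterm) \<Rightarrow> lterm \<Rightarrow> lterm" where
  "psubst \<sigma> (Var i) = \<sigma> i"
| "psubst \<sigma> (App s t) = App (psubst \<sigma> s) (psubst \<sigma> t)"
| "psubst \<sigma> (Abs t) = Abs (psubst (up \<sigma>) t)"

lemma rename_psubst_Var: "rename f t = psubst (Var \<circ> f) t"
proof (induction t arbitrary: f)
  case (Abs t)
  have "up (\<lambda>a. Var (f a)) = (\<lambda>a. Var (extn 1 f a))"
    by (auto simp: up_def fun_eq_iff lift_def extn_def split: nat.split)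
  then show ?case using Abs by simp
qed auto

lemma rename_psubst: "rename f (psubst \<sigma> t) = psubst (rename f \<circ> \<sigma>) t"
proof (induction t arbitrary: f \<sigma>)
  case (Abs t)
  have "(\<lambda>a. rename (extn 1 f) (up \<sigma> a)) = up (\<lambda>a. rename f (\<sigma> a))"
    by (auto simp: up_def fun_eq_iff lift_def rename_comp split: nat.split)
       (auto simp: extn_def o_def)
  then show ?case using Abs by simp
qed auto

lemma psubst_rename: "psubst \<sigma> (rename f t) = psubst (\<sigma> \<circ> f) t"
proof (induction t arbitrary: f \<sigma>)
  case (Abs t)
  have "(\<lambda>a. up \<sigma> (extn 1 f a)) = up (\<lambda>a. \<sigma> (f a))"
    by (auto simp: up_def fun_eq_iff extn_def split: nat.split)
  then show ?case using Abs by simp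
qed auto

lemma psubst_psubst: "psubst \<sigma> (psubst \<tau> t) = psubst (psubst \<sigma> \<circ> \<tau>) t"
proof (induction t arbitrary: \<sigma> \<tau>)
  case (Abs t)
  have "(\<lambda>a. psubst (up \<sigma>) (up \<tau> a)) = up (\<lambda>a. psubst \<sigma> (\<tau> a))"
    by (auto simp: up_def fun_eq_iff lift_def psubst_rename rename_psubst split: nat.split)
       (auto simp: up_def o_def lift_def)
  then show ?case using Abs by simp
qed auto

lemma psubst_Var[simp]: "psubst Var t = t"
proof -
  have "psubst Var t = rename id t" by (simp add: rename_psubst_Var)
  then show ?thesis by simp
qed

definition s\<sigma> :: "nat \<Rightarrow> lterm \<Rightarrow> nat \<Rightarrow> lterm" where
  "s\<sigma> k s i = (if i < k then Var i else if i = k then s else Var (i - 1))"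

lemma subst_psubst: "subst t k s = psubst (s\<sigma> k s) t"
proof (induction t arbitrary: k s)
  case (Abs t)
  have "up (s\<sigma> k s) = s\<sigma> (Suc k) (lift s)"
    by (auto simp: up_def fun_eq_iff s\<sigma>_def lift_def split: nat.split)
  then show ?case using Abs by simp
qed (auto simp: s\<sigma>_def)

lemma rename_subst0: "rename f (subst t 0 s) = subst (rename (extn 1 f) t) 0 (rename f s)"
  unfolding subst_psubst rename_psubst_Var psubst_psubst
  by (rule arg_cong[where f="\<lambda>\<sigma>. psubst \<sigma> t"]) (auto simp: fun_eq_iff s\<sigma>_def extn_def)

lemma s\<sigma>_Suc[simp]: "s\<sigma> 0 x \<circ> Suc = Var"
  by (auto simp: s\<sigma>_def fun_eq_iff)

lemma psubst_subst0: "psubst \<sigma> (subst t 0 s) = subst (psubst (up \<sigma>) t) 0 (psubst \<sigma> s)"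
  unfolding subst_psubst psubst_psubst
  by (rule arg_cong[where f="\<lambda>\<sigma>. psubst \<sigma> t"])
     (auto simp: fun_eq_iff s\<sigma>_def up_def lift_def psubst_rename split: nat.split)

lemma rename_lift: "rename (extn 1 f) (lift t) = lift (rename f t)"
  by (simp add: lift_def rename_comp) (simp add: extn_def o_def)




lemma bs_AppL: "beta_star s s' \<Longrightarrow> beta_star (App s t) (App s' t)"
  by (induction rule: rtranclp_induct) (auto intro: rtranclp.rtrancl_into_rtrancl beta.intros)
lemma bs_AppR: "beta_star t t' \<Longrightarrow> beta_star (App s t) (App s t')"
  by (induction rule: rtranclp_induct) (auto intro: rtranclp.rtrancl_into_rtrancl beta.intros)
lemma bs_App: "beta_star s s' \<Longrightarrow> beta_star t t' \<Longrightarrow> beta_star (App s t) (App s' t')"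
  by (meson bs_AppL bs_AppR rtranclp_trans)
lemma bs_Abs: "beta_star t t' \<Longrightarrow> beta_star (Abs t) (Abs t')"
  by (induction rule: rtranclp_induct) (auto intro: rtranclp.rtrancl_into_rtrancl beta.intros)

inductive par :: "lterm \<Rightarrow> lterm \<Rightarrow> bool" where
  par_var: "par (Var i) (Var i)"
| par_abs: "par t t' \<Longrightarrow> par (Abs t) (Abs t')"
| par_app: "par s s' \<Longrightarrow> par t t' \<Longrightarrow> par (App s t) (App s' t')"
| par_beta: "par s s' \<Longrightarrow> par t t' \<Longrightarrow> par (App (Abs s) t) (subst s' 0 t')"

lemma par_refl[simp, intro]: "par t t"
  by (induction t) (auto intro: par.intros)

lemma par_rename: "par t t' \<Longrightarrow> par (rename f t) (rename f t')"
proof (induction arbitrary: f rule: par.induct)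
  case (par_beta s s' t t')
  then show ?case by (simp add: rename_subst0 par.par_beta)
qed (auto intro: par.intros)

lemma par_psubst: "par t t' \<Longrightarrow> (\<forall>i. par (\<sigma> i) (\<sigma>' i)) \<Longrightarrow> par (psubst \<sigma> t) (psubst \<sigma>' t')"
proof (induction arbitrary: \<sigma> \<sigma>' rule: par.induct)
  case (par_abs t t')
  have "\<forall>i. par (up \<sigma> i) (up \<sigma>' i)"
    using par_abs.prems by (auto simp: up_def lift_def par_rename split: nat.split)
  then show ?case using par_abs by (auto intro: par.intros)
next
  case (par_beta s s' t t')
  have "\<forall>i. par (up \<sigma> i) (up \<sigma>' i)"
    using par_beta.prems by (auto simp: up_def lift_def par_rename split: nat.split)
  then show ?case using par_beta by (auto simp: psubst_subst0 intro: par.intros)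
qed (auto intro: par.intros)

lemma par_subst: "par s s' \<Longrightarrow> par t t' \<Longrightarrow> par (subst s 0 t) (subst s' 0 t')"
  unfolding subst_psubst
  by (erule par_psubst) (auto simp: s\<sigma>_def)

fun cd :: "lterm \<Rightarrow> lterm" where
  "cd (Var i) = Var i"
| "cd (Abs t) = Abs (cd t)"
| "cd (App (Abs s) t) = subst (cd s) 0 (cd t)"
| "cd (App s t) = App (cd s) (cd t)"

lemma par_Abs_inv: "par (Abs s) u \<Longrightarrow> \<exists>s'. u = Abs s' \<and> par s s'"
  by (cases rule: par.cases) auto

lemma par_cd: "par t t' \<Longrightarrow> par t' (cd t)"
proof (induction rule: par.induct)
  case (par_app s s' t t')
  show ?case
  proof (cases s)
    case (Abs s0)
    then obtain s1 where "s' = Abs s1" "par s0 s1" using par_app par_Abs_inv by blast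
    moreover have "par s1 (cd s0)" using par_app.IH(1) Abs \<open>s' = Abs s1\<close>
      by (auto dest: par_Abs_inv)
    ultimately show ?thesis using Abs par_app by (auto intro: par.intros)
  qed (use par_app in \<open>auto intro: par.intros\<close>)
qed (auto intro: par.intros par_subst)

lemma par_strip: "par\<^sup>*\<^sup>* a b \<Longrightarrow> par a c \<Longrightarrow> \<exists>d. par b d \<and> par\<^sup>*\<^sup>* c d"
proof (induction arbitrary: c rule: rtranclp_induct)
  case base then show ?case by auto
next
  case (step b b')
  then obtain d where "par b d" "par\<^sup>*\<^sup>* c d" by blast
  then have "par d (cd b)" "par b' (cd b)" using par_cd step by auto
  then show ?case using \<open>par\<^sup>*\<^sup>* c d\<close> by (meson rtranclp.rtrancl_into_rtrancl)
qed

lemma par_confl0: "par\<^sup>*\<^sup>* a c \<Longrightarrow> par\<^sup>*\<^sup>* a b \<Longrightarrow> \<exists>d. par\<^sup>*\<^sup>* b d \<and> par\<^sup>*\<^sup>* c d"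
proof (induction arbitrary: b rule: rtranclp_induct)
  case base then show ?case by auto
next
  case (step c c')
  then obtain d where "par\<^sup>*\<^sup>* b d" "par\<^sup>*\<^sup>* c d" by blast
  then obtain d2 where "par d d2" "par\<^sup>*\<^sup>* c' d2" using par_strip step by blast
  then show ?case using \<open>par\<^sup>*\<^sup>* b d\<close> by (meson rtranclp.rtrancl_into_rtrancl)
qed

lemma beta_par: "beta s t \<Longrightarrow> par s t"
  by (induction rule: beta.induct) (auto intro: par.intros)

lemma par_bs: "par s t \<Longrightarrow> beta_star s t"
proof (induction rule: par.induct)
  case (par_beta s s' t t')
  then have "beta_star (App (Abs s) t) (App (Abs s') t')" by (simp add: bs_Abs bs_App)
  then show ?case by (meson beta.beta_redex rtranclp.rtrancl_into_rtrancl)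
qed (auto intro: bs_Abs bs_App)

lemma bs_eq_par: "beta_star = par\<^sup>*\<^sup>*"
proof (intro ext iffI)
  fix a b assume "beta_star a b" then show "par\<^sup>*\<^sup>* a b"
    by (induction rule: rtranclp_induct) (auto intro: rtranclp.rtrancl_into_rtrancl beta_par)
next
  fix a b assume "par\<^sup>*\<^sup>* a b" then show "beta_star a b"
    by (induction rule: rtranclp_induct) (auto intro: rtranclp_trans par_bs)
qed

lemma beta_confl: "beta_star a b \<Longrightarrow> beta_star a c \<Longrightarrow> \<exists>d. beta_star b d \<and> beta_star c d"
  unfolding bs_eq_par using par_confl0 by blast




lemma absn_0[simp]: "absn 0 t = t" by (simp add: absn_def)
lemma absn_Suc: "absn (Suc n) t = Abs (absn n t)" by (simp add: absn_def)
lemma absn_Suc': "absn (Suc n) t = absn n (Abs t)" by (simp add: absn_def funpow_Suc_right del: funpow.simps)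
lemma apps_Nil[simp]: "apps h [] = h" by (simp add: apps_def)
lemma apps_snoc[simp]: "apps h (ts @ [t]) = App (apps h ts) t" by (simp add: apps_def)

lemma rename_absn: "rename f (absn n t) = absn n (rename (extn n f) t)"
  by (induction n arbitrary: f) (auto simp: absn_Suc extn_add)

lemma rename_apps: "rename f (apps h ts) = apps (rename f h) (map (rename f) ts)"
  by (induction ts rule: rev_induct) auto

lemma bs_absn: "beta_star t t' \<Longrightarrow> beta_star (absn n t) (absn n t')"
  by (induction n) (auto simp: absn_Suc bs_Abs)

lemma bs_apps: "list_all2 beta_star ts ts' \<Longrightarrow> beta_star (apps h ts) (apps h ts')"
proof (induction ts arbitrary: ts' rule: rev_induct)
  case Nil then show ?case by simp
next
  case (snoc x xs)
  then obtain ys y where "ts' = ys @ [y]" "list_all2 beta_star xs ys" "beta_star x y"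
    by (auto simp: list_all2_append1 list_all2_Cons1)
  then show ?case using snoc by (auto intro: bs_App)
qed

lemma apps_Var_not_Abs[simp]: "apps (Var y) ts \<noteq> Abs t"
  by (induction ts rule: rev_induct) auto
lemma apps_Var_not_Abs'[simp]: "Abs t \<noteq> apps (Var y) ts"
  using apps_Var_not_Abs by metis

lemma bs_Abs_inv: "beta_star (Abs t) u \<Longrightarrow> \<exists>t'. u = Abs t' \<and> beta_star t t'"
proof (induction rule: rtranclp_induct)
  case (step y z)
  then obtain t' where "y = Abs t'" "beta_star t t'" by blast
  moreover from step(2) this(1) obtain t'' where "z = Abs t''" "beta t' t''"
    by (cases rule: beta.cases) auto
  ultimately show ?case by (blast intro: rtranclp.rtrancl_into_rtrancl)
qed auto

lemma bs_absn_inv: "beta_star (absn n t) u \<Longrightarrow> \<exists>t'. u = absn n t' \<and> beta_star t t'"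
proof (induction n arbitrary: u)
  case (Suc n)
  then show ?case by (auto simp: absn_Suc dest!: bs_Abs_inv)
qed auto

lemma beta_apps_inv: "beta (apps (Var y) ts) u \<Longrightarrow> \<exists>ts'. u = apps (Var y) ts' \<and> list_all2 beta_star ts ts'"
proof (induction ts arbitrary: u rule: rev_induct)
  case Nil then show ?case by (auto elim: beta.cases)
next
  case (snoc x xs)
  from snoc.prems have "beta (App (apps (Var y) xs) x) u" by simp
  then show ?case
  proof (cases rule: beta.cases)
    case (beta_appL s')
    then obtain ts' where "s' = apps (Var y) ts'" "list_all2 beta_star xs ts'" using snoc.IH by blast
    then show ?thesis using beta_appL
      by (intro exI[of _ "ts' @ [x]"]) (auto intro: list_all2_appendI)
  next
    case (beta_appR x')
    then show ?thesis
      by (intro exI[of _ "xs @ [x']"]) (auto intro: list_all2_appendI list_all2_refl)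
  qed auto
qed

lemma la2_rtrans: "list_all2 (r\<^sup>*\<^sup>*) a b \<Longrightarrow> list_all2 (r\<^sup>*\<^sup>*) b c \<Longrightarrow> list_all2 (r\<^sup>*\<^sup>*) a c"
proof (induction a arbitrary: b c)
  case (Cons x xs)
  then obtain y ys z zs where "b = y # ys" "c = z # zs" "r\<^sup>*\<^sup>* x y" "r\<^sup>*\<^sup>* y z"
    "list_all2 (r\<^sup>*\<^sup>*) xs ys" "list_all2 (r\<^sup>*\<^sup>*) ys zs"
    by (auto simp: list_all2_Cons1)
  then show ?case using Cons.IH by (auto intro: rtranclp_trans)
qed simp

lemma bs_apps_inv: "beta_star (apps (Var y) ts) u \<Longrightarrow> \<exists>ts'. u = apps (Var y) ts' \<and> list_all2 beta_star ts ts'"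
proof (induction rule: rtranclp_induct)
  case base then show ?case by (auto intro: list_all2_refl)
next
  case (step u v)
  then obtain ts' where "u = apps (Var y) ts'" "list_all2 beta_star ts ts'" by blast
  moreover from step(2) this(1) obtain ts'' where "v = apps (Var y) ts''" "list_all2 beta_star ts' ts''"
    using beta_apps_inv by blast
  moreover have "list_all2 beta_star ts ts''"
    using la2_rtrans \<open>list_all2 beta_star ts ts'\<close> \<open>list_all2 beta_star ts' ts''\<close> by blast
  ultimately show ?case by blast
qed

lemma bs_hnf_inv: "beta_star (absn n (apps (Var y) ts)) u
  \<Longrightarrow> \<exists>ts'. u = absn n (apps (Var y) ts') \<and> list_all2 beta_star ts ts'"
  by (blast dest: bs_absn_inv bs_apps_inv)

lemma apps_Var_inj: "apps (Var y) ts = apps (Var y') ts' \<longleftrightarrow> y = y' \<and> ts = ts'"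
proof (induction ts arbitrary: ts' rule: rev_induct)
  case Nil then show ?case by (cases ts' rule: rev_exhaust) auto
next
  case (snoc x xs) then show ?case by (cases ts' rule: rev_exhaust) auto
qed

lemma hnf_inj: "absn n (apps (Var y) ts) = absn n' (apps (Var y') ts') \<Longrightarrow> n = n' \<and> y = y' \<and> ts = ts'"
proof (induction n arbitrary: n')
  case 0 then show ?case
    by (cases n') (auto simp: absn_Suc apps_Var_inj dest: sym)
next
  case (Suc n) then show ?case
    by (cases n') (auto simp: absn_Suc apps_Var_inj)
qed

lemma rename_Abs_inv: "rename f t = Abs u \<Longrightarrow> \<exists>t0. t = Abs t0 \<and> u = rename (extn 1 f) t0"
  by (cases t) auto

lemma rename_absn_inv: "rename f t = absn n u \<Longrightarrow> \<exists>t0. t = absn n t0 \<and> u = rename (extn n f) t0"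
proof (induction n arbitrary: f t u)
  case (Suc n)
  then obtain t0 where "t = Abs t0" "absn n u = rename (extn 1 f) t0"
    by (auto simp: absn_Suc dest: rename_Abs_inv)
  then show ?case using Suc.IH[of "extn 1 f" t0 u] by (auto simp: absn_Suc extn_add)
qed auto

lemma rename_apps_inv: "rename f t = apps (Var y) ts \<Longrightarrow> \<exists>w ts0. t = apps (Var w) ts0 \<and> f w = y \<and> ts = map (rename f) ts0"
proof (induction ts arbitrary: t rule: rev_induct)
  case Nil then show ?case by (cases t) auto
next
  case (snoc x xs)
  then obtain a b where "t = App a b" "rename f a = apps (Var y) xs" "rename f b = x" by (cases t) auto
  then show ?case using snoc.IH[of a] by (metis list.simps(8,9) map_append apps_snoc)
qed

lemma beta_rename: "beta t u \<Longrightarrow> beta (rename f t) (rename f u)"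
proof (induction arbitrary: f rule: beta.induct)
  case (beta_redex t s) then show ?case by (simp add: rename_subst0 beta.beta_redex)
qed (auto intro: beta.intros)

lemma bs_rename: "beta_star t u \<Longrightarrow> beta_star (rename f t) (rename f u)"
  by (induction rule: rtranclp_induct) (auto intro: rtranclp.rtrancl_into_rtrancl beta_rename)

lemma eta_rename: "eta t u \<Longrightarrow> eta (rename f t) (rename f u)"
proof (induction arbitrary: f rule: eta.induct)
  case (eta_redex t)
  have "extn 1 f 0 = 0" by (simp add: extn_def)
  then show ?case using rename_lift[of f t] by (simp add: eta.eta_redex)
qed (auto intro: eta.intros)

lemma bes_rename: "betaeta_star t u \<Longrightarrow> betaeta_star (rename f t) (rename f u)"
  by (induction rule: rtranclp_induct) (auto intro: rtranclp.rtrancl_into_rtrancl beta_rename eta_rename)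

lemma beta_rename_refl: "beta a u \<Longrightarrow> a = rename f t \<Longrightarrow> \<exists>t0. beta t t0 \<and> u = rename f t0"
proof (induction arbitrary: f t rule: beta.induct)
  case (beta_redex s r)
  then obtain a b where t: "t = App a b" "rename f a = Abs s" "rename f b = r" by (cases t) auto
  then obtain s0 where "a = Abs s0" "s = rename (extn 1 f) s0" by (auto dest: rename_Abs_inv)
  then show ?case using t by (intro exI[of _ "subst s0 0 b"]) (auto simp: rename_subst0 beta.beta_redex)
next
  case (beta_appL s s' r)
  then obtain a b where t: "t = App a b" "rename f a = s" "rename f b = r" by (cases t) auto
  then show ?case using beta_appL.IH[of f a] by (auto intro: beta.intros)
next
  case (beta_appR r r' s)
  then obtain a b where t: "t = App a b" "rename f a = s" "rename f b = r" by (cases t) auto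
  then show ?case using beta_appR.IH[of f b] by (auto intro: beta.intros)
next
  case (beta_abs s s')
  then obtain a where t: "t = Abs a" "rename (extn 1 f) a = s" by (cases t) auto
  then show ?case using beta_abs.IH[of "extn 1 f" a] by (auto intro: beta.intros)
qed

lemma bs_rename_refl: "beta_star (rename f t) u \<Longrightarrow> \<exists>t0. beta_star t t0 \<and> u = rename f t0"
proof (induction rule: rtranclp_induct)
  case (step y z)
  then obtain t0 where "beta_star t t0" "y = rename f t0" by blast
  moreover then obtain t1 where "beta t0 t1" "z = rename f t1" using step(2) beta_rename_refl by blast
  ultimately show ?case by (blast intro: rtranclp.rtrancl_into_rtrancl)
qed auto

lemma bes_of_bs: "beta_star t u \<Longrightarrow> betaeta_star t u"
  by (induction rule: rtranclp_induct) (auto intro: rtranclp.rtrancl_into_rtrancl)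

lemma bes_AppL: "betaeta_star s s' \<Longrightarrow> betaeta_star (App s t) (App s' t)"
  by (induction rule: rtranclp_induct) (auto intro: rtranclp.rtrancl_into_rtrancl beta.intros eta.intros)
lemma bes_AppR: "betaeta_star t t' \<Longrightarrow> betaeta_star (App s t) (App s t')"
  by (induction rule: rtranclp_induct) (auto intro: rtranclp.rtrancl_into_rtrancl beta.intros eta.intros)
lemma bes_App: "betaeta_star s s' \<Longrightarrow> betaeta_star t t' \<Longrightarrow> betaeta_star (App s t) (App s' t')"
  by (rule rtranclp_trans[OF bes_AppL bes_AppR])
lemma bes_Abs: "betaeta_star t t' \<Longrightarrow> betaeta_star (Abs t) (Abs t')"
  by (induction rule: rtranclp_induct) (auto intro: rtranclp.rtrancl_into_rtrancl beta.intros eta.intros)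
lemma bes_absn: "betaeta_star t t' \<Longrightarrow> betaeta_star (absn n t) (absn n t')"
  by (induction n) (auto simp: absn_Suc bes_Abs)
lemma bes_apps: "list_all2 betaeta_star ts ts' \<Longrightarrow> betaeta_star (apps h ts) (apps h ts')"
proof (induction ts arbitrary: ts' rule: rev_induct)
  case Nil then show ?case by simp
next
  case (snoc x xs)
  then obtain ys y where "ts' = ys @ [y]" "list_all2 betaeta_star xs ys" "betaeta_star x y"
    by (auto simp: list_all2_append1 list_all2_Cons1)
  then show ?case using snoc by (auto intro: bes_App)
qed




definition gv :: "nat \<Rightarrow> nat \<Rightarrow> nat" where "gv j k = (if k = j then 0 else Suc k)"

lemma abstract_var_gv: "abstract_var j B = Abs (rename (gv j) B)"
  by (simp add: abstract_var_def gv_def[abs_def])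

lemma gv_inj: "inj (gv j)"
  by (auto simp: inj_def gv_def)

lemma gv_0: "gv j k = 0 \<longleftrightarrow> k = j" by (simp add: gv_def)

lemma Id_rename[simp]: "rename f Id_term = Id_term"
  by (simp add: Id_term_def extn_def)

lemma av_rename:
  assumes "a < k"
  shows "rename (extn k f) (abstract_var a B) = abstract_var a (rename (extn k f) B)"
proof -
  have "extn 1 (extn k f) \<circ> gv a = gv a \<circ> extn k f"
    using assms by (auto simp: fun_eq_iff extn_def gv_def)
  then show ?thesis by (simp add: abstract_var_gv rename_comp)
qed

lemma esize_rename: "esize T s \<Longrightarrow> esize (rename f T) s"
proof (induction arbitrary: f rule: esize.induct)
  case (esize_id Q)
  then show ?case using bs_rename[OF esize_id.hyps, of f] by (auto intro: esize.esize_id)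
next
  case (esize_exp Q m Qs ss)
  let ?F = "extn (Suc m) f"
  have "extn (Suc m) f m = m" by (simp add: extn_def)
  then have r: "beta_star (rename f Q) (absn (Suc m) (apps (Var m) (map (rename ?F) Qs)))"
    using bs_rename[OF esize_exp.hyps(1), of f] by (simp add: rename_absn rename_apps)
  have "\<forall>i<m. esize (abstract_var (m - 1 - i) (map (rename ?F) Qs ! i)) (ss ! i)"
  proof (intro allI impI)
    fix i assume "i < m"
    then have "esize (rename ?F (abstract_var (m - 1 - i) (Qs ! i))) (ss ! i)"
      using esize_exp.IH by blast
    then show "esize (abstract_var (m - 1 - i) (map (rename ?F) Qs ! i)) (ss ! i)"
      using av_rename[of "m - 1 - i" "Suc m" f "Qs ! i"] \<open>i < m\<close> esize_exp.hyps(2) by simp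
  qed
  then show ?case using esize.esize_exp[OF r] esize_exp.hyps(2,3) by simp
qed

lemma esize_AV:
  assumes "esize (Abs (rename \<phi> B)) s" "inj \<phi>" "\<And>k. \<psi> k = 0 \<longleftrightarrow> \<phi> k = 0"
  shows "esize (Abs (rename \<psi> B)) s"
proof -
  define f where "f x = \<psi> (inv \<phi> (Suc x)) - 1" for x
  have "extn 1 f \<circ> \<phi> = \<psi>"
  proof
    fix k show "(extn 1 f \<circ> \<phi>) k = \<psi> k"
    proof (cases "\<phi> k")
      case 0 then show ?thesis using assms(3) by (simp add: extn_def)
    next
      case (Suc x)
      then have "inv \<phi> (Suc x) = k" using inv_f_f[OF assms(2), of k] by simp
      moreover have "\<psi> k \<noteq> 0" using assms(3) Suc by simp
      ultimately show ?thesis using Suc by (simp add: extn_def f_def)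
    qed
  qed
  then show ?thesis using esize_rename[OF assms(1), of f] by (simp add: rename_comp)
qed

lemma bes_trans: "betaeta_star a b \<Longrightarrow> betaeta_star b c \<Longrightarrow> betaeta_star a c"
  by (rule rtranclp_trans)

lemma eta_exp_var:
  "betaeta_star (absn k (apps (Var (k + a)) (map (\<lambda>i. Var (k - 1 - i)) [0..<k]))) (Var a)"
proof (induction k)
  case 0 then show ?case by simp
next
  case (Suc k)
  let ?X = "apps (Var (k + a)) (map (\<lambda>i. Var (k - 1 - i)) [0..<k])"
  have m1: "map (\<lambda>i. Var (Suc k - 1 - i)) [0..<Suc k] = map (\<lambda>i. Var (k - i)) [0..<k] @ [Var 0]"
    by simp
  have "lift ?X = apps (Var (Suc (k + a))) (map (rename Suc) (map (\<lambda>i. Var (k - 1 - i)) [0..<k]))"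
    by (simp only: lift_def rename_apps rename.simps(1))
  also have "map (rename Suc) (map (\<lambda>i. Var (k - 1 - i)) [0..<k]) = map (\<lambda>i. Var (k - i)) [0..<k]"
    by (auto simp: list_eq_iff_nth_eq)
  finally have m2: "lift ?X = apps (Var (Suc (k + a))) (map (\<lambda>i. Var (k - i)) [0..<k])" .
  have "apps (Var (Suc k + a)) (map (\<lambda>i. Var (Suc k - 1 - i)) [0..<Suc k])
      = App (lift ?X) (Var 0)"
    by (simp only: m1 m2 apps_snoc) simp
  then have e: "absn (Suc k) (apps (Var (Suc k + a)) (map (\<lambda>i. Var (Suc k - 1 - i)) [0..<Suc k]))
     = absn k (Abs (App (lift ?X) (Var 0)))" by (simp add: absn_Suc')
  have "betaeta_star (absn k (Abs (App (lift ?X) (Var 0)))) (absn k ?X)"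
    by (rule bes_absn) (auto intro: eta.eta_redex)
  then have "betaeta_star (absn k (Abs (App (lift ?X) (Var 0)))) (Var a)"
    by (rule bes_trans[OF _ Suc.IH])
  then show ?case by (simp only: e)
qed

definition joinb :: "lterm \<Rightarrow> lterm \<Rightarrow> bool" where
  "joinb A B = (\<exists>C. beta_star A C \<and> beta_star B C)"

lemma joinb_refl[simp]: "joinb A A" by (auto simp: joinb_def)

lemma hnf_cmp:
  assumes "beta_star A (absn n (apps (Var y) Ms))" "joinb A B"
  shows "\<exists>Ms1. beta_star B (absn n (apps (Var y) Ms1)) \<and> list_all2 beta_star Ms Ms1"
proof -
  obtain C where C: "beta_star A C" "beta_star B C" using assms(2) by (auto simp: joinb_def)
  obtain D where D: "beta_star (absn n (apps (Var y) Ms)) D" "beta_star C D"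
    using beta_confl[OF assms(1) C(1)] by blast
  then obtain Ms1 where "D = absn n (apps (Var y) Ms1)" "list_all2 beta_star Ms Ms1"
    using bs_hnf_inv by blast
  then show ?thesis using C(2) D(2) by (meson rtranclp_trans)
qed

lemma hnf_cmp2:
  assumes "beta_star A (absn n (apps (Var y) Ms))" "joinb A B"
    "beta_star B (absn n' (apps (Var y') Ms'))"
  shows "n' = n \<and> y' = y \<and> list_all2 joinb Ms Ms'"
proof -
  obtain Ms1 where M1: "beta_star B (absn n (apps (Var y) Ms1))" "list_all2 beta_star Ms Ms1"
    using hnf_cmp[OF assms(1,2)] by blast
  obtain E where E: "beta_star (absn n (apps (Var y) Ms1)) E" "beta_star (absn n' (apps (Var y') Ms')) E"
    using beta_confl[OF M1(1) assms(3)] by blast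
  obtain Ms2 where E1: "E = absn n (apps (Var y) Ms2)" "list_all2 beta_star Ms1 Ms2"
    using bs_hnf_inv[OF E(1)] by blast
  obtain Ms3 where E2: "E = absn n' (apps (Var y') Ms3)" "list_all2 beta_star Ms' Ms3"
    using bs_hnf_inv[OF E(2)] by blast
  have eq: "n' = n" "y' = y" "Ms3 = Ms2" using hnf_inj[of n y Ms2 n' y' Ms3] E1 E2 by auto
  have "list_all2 beta_star Ms Ms2" using la2_rtrans M1(2) E1(2) by blast
  then have "list_all2 joinb Ms Ms'" using E2(2) eq(3)
    by (fastforce simp: list_all2_conv_all_nth joinb_def)
  then show ?thesis using eq by simp
qed

lemma hnf_data_Some: "hnf_data A = Some (n, y, Ms) \<Longrightarrow> beta_star A (absn n (apps (Var y) Ms))"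
proof -
  assume h: "hnf_data A = Some (n, y, Ms)"
  define P where "P = (\<lambda>(n, y, Ms). beta_star A (absn n (apps (Var y) Ms)))"
  have ex: "\<exists>n y Ms. beta_star A (absn n (apps (Var y) Ms))"
    using h by (rule contrapos_pp) (simp add: hnf_data_def)
  then have ex': "\<exists>x. P x" by (auto simp: P_def)
  have "hnf_data A = Some (Eps P)" using ex by (simp add: hnf_data_def P_def)
  then have "Eps P = (n, y, Ms)" using h by simp
  moreover have "P (Eps P)" using ex' by (rule someI_ex)
  ultimately show ?thesis by (simp add: P_def)
qed

lemma hnf_data_ex: "beta_star A (absn n (apps (Var y) Ms)) \<Longrightarrow> \<exists>n' y' Ms'. hnf_data A = Some (n', y', Ms')"
proof -
  assume "beta_star A (absn n (apps (Var y) Ms))"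
  then have "\<exists>n y Ms. beta_star A (absn n (apps (Var y) Ms))" by blast
  then have "hnf_data A \<noteq> None" unfolding hnf_data_def by (subst if_P) auto
  then obtain d where "hnf_data A = Some d" by blast
  then show ?thesis by (cases d) auto
qed

lemma BT_Some: "hnf_data A = Some (n, y, Ms) \<Longrightarrow> BT A = Node n y (map BT Ms)"
  by (subst BT.code) simp

lemma BT_Node_inv: "BT A = Node n y Us \<Longrightarrow> \<exists>Ms. hnf_data A = Some (n, y, Ms) \<and> Us = map BT Ms"
  by (subst (asm) BT.code) (auto split: option.splits)




primcorec ren_bt :: "(nat \<Rightarrow> nat) \<Rightarrow> bt \<Rightarrow> bt" where
  "ren_bt f U = (case U of Bot \<Rightarrow> Bot | Node n y Us \<Rightarrow> Node n (extn n f y) (map (ren_bt (extn n f)) Us))"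

lemma ren_bt_Node[simp]: "ren_bt f (Node n y Us) = Node n (extn n f y) (map (ren_bt (extn n f)) Us)"
  by (subst ren_bt.code) simp
lemma ren_bt_Bot[simp]: "ren_bt f Bot = Bot"
  by (subst ren_bt.code) simp
lemma shift_bt_Node[simp]: "shift_bt c d (Node n y Us) = Node n (if y < c + n then y else y + d) (map (shift_bt (c + n) d) Us)"
  by (subst shift_bt.code) simp
lemma shift_bt_Bot[simp]: "shift_bt c d Bot = Bot"
  by (subst shift_bt.code) simp

definition sh :: "nat \<Rightarrow> nat \<Rightarrow> nat \<Rightarrow> nat" where "sh c d k = (if k < c then k else k + d)"

lemma extn_sh: "extn n (sh c d) = sh (c + n) d"
  by (auto simp: fun_eq_iff extn_def sh_def)

lemma shift_ren: "shift_bt c d U = ren_bt (sh c d) U"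
proof -
  define R where "R a b = (\<exists>c d U. a = shift_bt c d U \<and> b = ren_bt (sh c d) U)" for a b
  have "R (shift_bt c d U) (ren_bt (sh c d) U)" by (auto simp: R_def)
  then show ?thesis
  proof (rule bt.coinduct[of R])
    fix a b assume "R a b"
    then obtain c d U where ab: "a = shift_bt c d U" "b = ren_bt (sh c d) U" by (auto simp: R_def)
    show "(a = Bot) = (b = Bot) \<and>
       (a \<noteq> Bot \<longrightarrow> b \<noteq> Bot \<longrightarrow> un_Node1 a = un_Node1 b \<and> un_Node2 a = un_Node2 b \<and>
         list_all2 R (un_Node3 a) (un_Node3 b))"
    proof (cases U)
      case Bot then show ?thesis using ab by simp
    next
      case (Node n y Us)
      have "list_all2 R (map (shift_bt (c + n) d) Us) (map (ren_bt (sh (c + n) d)) Us)"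
        by (auto simp: list_all2_conv_all_nth R_def)
      then show ?thesis using ab Node by (auto simp: extn_sh) (auto simp: extn_def sh_def)
    qed
  qed
qed

lemma ren_comp: "ren_bt f (ren_bt g U) = ren_bt (f \<circ> g) U"
proof -
  define R where "R a b = (\<exists>f g U. a = ren_bt f (ren_bt g U) \<and> b = ren_bt (f \<circ> g) U)" for a b
  have "R (ren_bt f (ren_bt g U)) (ren_bt (f \<circ> g) U)" by (auto simp: R_def)
  then show ?thesis
  proof (rule bt.coinduct[of R])
    fix a b assume "R a b"
    then obtain f g U where ab: "a = ren_bt f (ren_bt g U)" "b = ren_bt (f \<circ> g) U" by (auto simp: R_def)
    show "(a = Bot) = (b = Bot) \<and>
       (a \<noteq> Bot \<longrightarrow> b \<noteq> Bot \<longrightarrow> un_Node1 a = un_Node1 b \<and> un_Node2 a = un_Node2 b \<and>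
         list_all2 R (un_Node3 a) (un_Node3 b))"
    proof (cases U)
      case Bot then show ?thesis using ab by simp
    next
      case (Node n y Us)
      have "list_all2 R (map (ren_bt (extn n f)) (map (ren_bt (extn n g)) Us)) (map (ren_bt (extn n (f \<circ> g))) Us)"
        by (auto simp: list_all2_conv_all_nth R_def extn_comp[symmetric])
      then show ?thesis using ab Node by (auto simp: extn_comp[symmetric])
    qed
  qed
qed

lemma ren_id: "ren_bt id U = U"
proof -
  define R where "R a b = (\<exists>U. a = ren_bt id U \<and> b = U)" for a b
  have "R (ren_bt id U) U" by (auto simp: R_def)
  then show ?thesis
  proof (rule bt.coinduct[of R])
    fix a b assume "R a b"
    then obtain U where ab: "a = ren_bt id U" "b = U" by (auto simp: R_def)
    show "(a = Bot) = (b = Bot) \<and>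
       (a \<noteq> Bot \<longrightarrow> b \<noteq> Bot \<longrightarrow> un_Node1 a = un_Node1 b \<and> un_Node2 a = un_Node2 b \<and>
         list_all2 R (un_Node3 a) (un_Node3 b))"
    proof (cases U)
      case Bot then show ?thesis using ab by simp
    next
      case (Node n y Us)
      have "list_all2 R (map (ren_bt id) Us) Us"
        by (auto simp: list_all2_conv_all_nth R_def)
      then show ?thesis using ab Node by auto
    qed
  qed
qed

lemma shift_0: "shift_bt c 0 U = U"
proof -
  have "sh c 0 = id" by (auto simp: sh_def fun_eq_iff)
  then show ?thesis by (simp add: shift_ren ren_id)
qed

lemma shift_00: "shift_bt c 0 = (\<lambda>x. x)"
  by (rule ext) (simp add: shift_0)

lemma bt_le_refl: "bt_le_eta p U U"
proof (rule bt_le_eta.coinduct[of "(=)"])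
  fix U V :: bt assume e: "U = V"
  show "U = Bot \<and> V = Bot \<or>
         (\<exists>m Vs Us Qs n y.
             U = Node n y Us \<and>
             V = Node (n + m) (y + m) (map (shift_bt 0 m) Vs @ Qs) \<and>
             m \<le> p \<and>
             length Vs = length Us \<and>
             list_all2 (\<lambda>a b. a = b \<or> bt_le_eta p a b) Us Vs \<and>
             length Qs = m \<and>
             (\<forall>i<m. \<exists>Q'. Qs ! i = BT Q' \<and> abstract_var (m - 1 - i) Q' \<in> E_p p))"
  proof (cases U)
    case Bot then show ?thesis using e by simp
  next
    case (Node n y Us)
    have "U = Node n y Us \<and> V = Node (n + 0) (y + 0) (map (shift_bt 0 0) Us @ []) \<and> 0 \<le> p \<and>
      length Us = length Us \<and> list_all2 (\<lambda>a b. a = b \<or> bt_le_eta p a b) Us Us \<and>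
      length ([]::bt list) = 0 \<and>
      (\<forall>i<0. \<exists>Q'. ([]::bt list) ! i = BT Q' \<and> abstract_var (0 - 1 - i) Q' \<in> E_p p)"
      using Node e by (auto simp: shift_00 list_all2_conv_all_nth)
    then show ?thesis by blast
  qed
qed simp




definition Gprop :: "nat \<Rightarrow> lterm \<Rightarrow> nat \<Rightarrow> bool" where
  "Gprop p' X s = (\<forall>\<phi> A0 j A V A' f. X = Abs (rename \<phi> A0) \<longrightarrow> inj \<phi> \<longrightarrow> (\<forall>k. \<phi> k = 0 \<longleftrightarrow> k = j)
     \<longrightarrow> joinb A0 A \<longrightarrow> bt_le_eta p' (BT A) V \<longrightarrow> BT A' = ren_bt f V
     \<longrightarrow> (\<exists>s'. s' \<le> s + p' \<and> esize (abstract_var (f j) A') s' \<and> betaeta_star A' (Var (f j))))"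

definition Tq :: bool where "Tq = (\<forall>X s. esize X s \<longrightarrow> Gprop 0 X s)"

lemma step1:
  assumes "beta_star (Abs (rename \<phi> A0)) (absn (Suc n) (apps (Var n) Qs))"
    "\<forall>k. \<phi> k = 0 \<longleftrightarrow> k = j"
  shows "\<exists>Qs0. beta_star A0 (absn n (apps (Var (n + j)) Qs0)) \<and> Qs = map (rename (extn n \<phi>)) Qs0"
proof -
  obtain t' where "Abs (absn n (apps (Var n) Qs)) = Abs t'" "beta_star (rename \<phi> A0) t'"
    using bs_Abs_inv assms(1) by (metis absn_Suc)
  then have "beta_star (rename \<phi> A0) (absn n (apps (Var n) Qs))" by simp
  then obtain B0 where B0: "beta_star A0 B0" "absn n (apps (Var n) Qs) = rename \<phi> B0"
    using bs_rename_refl by blast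
  then obtain C0 where C0: "B0 = absn n C0" "apps (Var n) Qs = rename (extn n \<phi>) C0"
    using rename_absn_inv[of \<phi> B0 n "apps (Var n) Qs"] by auto
  then obtain w Qs0 where w: "C0 = apps (Var w) Qs0" "extn n \<phi> w = n" "Qs = map (rename (extn n \<phi>)) Qs0"
    using rename_apps_inv[of "extn n \<phi>" C0 n Qs] by auto
  have "w = n + j"
  proof (cases "w < n")
    case True then show ?thesis using w(2) by (simp add: extn_def)
  next
    case False
    then have "\<phi> (w - n) = 0" using w(2) by (simp add: extn_def)
    then show ?thesis using assms(2) False by auto
  qed
  then show ?thesis using B0 C0 w by auto
qed

lemma core:
  assumes red: "beta_star X (absn (Suc n) (apps (Var n) Qs))"
    and lenQ: "length Qs = n" and lens: "length ss = n"
    and IH: "\<forall>i<n. Gprop p' (abstract_var (n - 1 - i) (Qs ! i)) (ss ! i)"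
    and T: "p' = 0 \<or> Tq"
  shows "Gprop p' X (max n (Max (insert 0 (Suc ` set ss))))"
  unfolding Gprop_def
proof (intro allI impI)
  fix \<phi> A0 j A V A' f
  assume X: "X = Abs (rename \<phi> A0)" and injphi: "inj \<phi>" and phi0: "\<forall>k. \<phi> k = 0 \<longleftrightarrow> k = j"
    and jn: "joinb A0 A" and le: "bt_le_eta p' (BT A) V" and eqR: "BT A' = ren_bt f V"
  define S where "S = max n (Max (insert 0 (Suc ` set ss)))"
  obtain Qs0 where hA0: "beta_star A0 (absn n (apps (Var (n + j)) Qs0))"
      and Qs: "Qs = map (rename (extn n \<phi>)) Qs0"
    using step1[OF red[unfolded X] phi0] by blast
  have lenQ0: "length Qs0 = n" using Qs lenQ by simp
  obtain Ms1 where "beta_star A (absn n (apps (Var (n + j)) Ms1))"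
    using hnf_cmp[OF hA0 jn] by blast
  then obtain nA yA Ms where hd: "hnf_data A = Some (nA, yA, Ms)" using hnf_data_ex by blast
  have "nA = n \<and> yA = n + j \<and> list_all2 joinb Qs0 Ms"
    using hnf_cmp2[OF hA0 jn hnf_data_Some[OF hd]] by blast
  then have nA: "nA = n" and yA: "yA = n + j" and jMs: "list_all2 joinb Qs0 Ms" by auto
  have lenMs: "length Ms = n" using jMs lenQ0 by (simp add: list_all2_lengthD)
  have BTA: "BT A = Node n (n + j) (map BT Ms)" using BT_Some[OF hd] nA yA by simp
  from le[unfolded BTA] obtain m Ws Qn where
      V: "V = Node (n + m) (n + j + m) (map (shift_bt 0 m) Ws @ Qn)" and mp: "m \<le> p'"
      and lenW: "length Ws = n" and leW: "list_all2 (bt_le_eta p') (map BT Ms) Ws"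
      and lenQn: "length Qn = m"
      and Qn: "\<forall>i<m. \<exists>Q'. Qn ! i = BT Q' \<and> abstract_var (m - 1 - i) Q' \<in> E_p p'"
    by (cases rule: bt_le_eta.cases) (auto simp: lenMs)
  have "extn (n + m) f (n + j + m) = n + m + f j" by (simp add: extn_def)
  then have "BT A' = Node (n + m) (n + m + f j) (map (ren_bt (extn (n + m) f)) (map (shift_bt 0 m) Ws @ Qn))"
    using eqR V by simp
  then obtain Ms' where hd': "hnf_data A' = Some (n + m, n + m + f j, Ms')"
      and BTMs': "map (ren_bt (extn (n + m) f)) (map (shift_bt 0 m) Ws @ Qn) = map BT Ms'"
    using BT_Node_inv by blast
  have hA': "beta_star A' (absn (n + m) (apps (Var (n + m + f j)) Ms'))" using hnf_data_Some[OF hd'] .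
  have lenMs': "length Ms' = n + m" using BTMs'[THEN arg_cong[where f=length]] lenW lenQn by simp
  have BT1: "BT (Ms' ! i) = ren_bt (extn (n + m) f \<circ> sh 0 m) (Ws ! i)" if "i < n" for i
  proof -
    have "BT (Ms' ! i) = map BT Ms' ! i" using that lenMs' by simp
    also have "\<dots> = ren_bt (extn (n + m) f) (shift_bt 0 m (Ws ! i))"
      using BTMs'[symmetric] that lenW by (simp add: nth_append)
    finally show ?thesis by (simp add: shift_ren ren_comp)
  qed
  have BT2: "BT (Ms' ! (n + i)) = ren_bt (extn (n + m) f) (Qn ! i)" if "i < m" for i
  proof -
    have "BT (Ms' ! (n + i)) = map BT Ms' ! (n + i)" using that lenMs' by simp
    also have "\<dots> = ren_bt (extn (n + m) f) (Qn ! i)"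
      using BTMs'[symmetric] that lenW lenQn by (simp add: nth_append)
    finally show ?thesis .
  qed
  have SgeS: "Suc (ss ! i) \<le> S" if "i < n" for i
  proof -
    have "Suc (ss ! i) \<in> insert 0 (Suc ` set ss)" using that lens by auto
    then have "Suc (ss ! i) \<le> Max (insert 0 (Suc ` set ss))" by (intro Max_ge) auto
    then show ?thesis by (simp add: S_def)
  qed
  have kids: "\<exists>s'. Suc s' \<le> S + p' \<and> esize (abstract_var (n + m - 1 - i) (Ms' ! i)) s'
        \<and> betaeta_star (Ms' ! i) (Var (n + m - 1 - i))" if "i < n + m" for i
  proof (cases "i < n")
    case True
    define a where "a = n - 1 - i"
    define \<phi>' where "\<phi>' = gv a \<circ> extn n \<phi>"
    define f' where "f' = extn (n + m) f \<circ> sh 0 m"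
    have G: "Gprop p' (abstract_var a (Qs ! i)) (ss ! i)" using IH True by (simp add: a_def)
    have X': "abstract_var a (Qs ! i) = Abs (rename \<phi>' (Qs0 ! i))"
      using True lenQ0 by (simp add: Qs abstract_var_gv rename_comp \<phi>'_def)
    have inj': "inj \<phi>'" unfolding \<phi>'_def by (rule inj_compose[OF gv_inj extn_inj[OF injphi]])
    have z': "\<forall>k. \<phi>' k = 0 \<longleftrightarrow> k = a"
      using True by (auto simp: \<phi>'_def gv_def extn_def a_def)
    have j': "joinb (Qs0 ! i) (Ms ! i)" using jMs True lenQ0 by (simp add: list_all2_conv_all_nth)
    have l': "bt_le_eta p' (BT (Ms ! i)) (Ws ! i)" using leW True lenMs by (simp add: list_all2_conv_all_nth)
    have r': "BT (Ms' ! i) = ren_bt f' (Ws ! i)" using BT1 True by (simp add: f'_def)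
    obtain s'' where s'': "s'' \<le> ss ! i + p'" "esize (abstract_var (f' a) (Ms' ! i)) s''"
        "betaeta_star (Ms' ! i) (Var (f' a))"
      using G[unfolded Gprop_def, rule_format, OF X' inj' z'[rule_format] j' l' r'] by blast
    have "f' a = n + m - 1 - i" using True by (simp add: f'_def a_def sh_def extn_def)
    then show ?thesis using s'' SgeS[OF True] by (intro exI[of _ s'']) auto
  next
    case False
    define i' where "i' = i - n"
    have i': "i' < m" "i = n + i'" using False that by (auto simp: i'_def)
    then have "p' \<noteq> 0" using mp by simp
    then have Tq using T by simp
    obtain Q' where Q': "Qn ! i' = BT Q'" "abstract_var (m - 1 - i') Q' \<in> E_p p'" using Qn i' by blast
    then obtain sq where sq: "esize (abstract_var (m - 1 - i') Q') sq" "sq < p'" by (auto simp: E_p_def)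
    have G: "Gprop 0 (abstract_var (m - 1 - i') Q') sq" using \<open>Tq\<close> sq(1) by (simp add: Tq_def)
    have X': "abstract_var (m - 1 - i') Q' = Abs (rename (gv (m - 1 - i')) Q')" by (rule abstract_var_gv)
    have z': "\<forall>k. gv (m - 1 - i') k = 0 \<longleftrightarrow> k = m - 1 - i'" by (simp add: gv_0)
    have r': "BT (Ms' ! i) = ren_bt (extn (n + m) f) (BT Q')" using BT2[OF i'(1)] Q'(1) i'(2) by simp
    obtain s'' where s'': "s'' \<le> sq + 0" "esize (abstract_var (extn (n + m) f (m - 1 - i')) (Ms' ! i)) s''"
        "betaeta_star (Ms' ! i) (Var (extn (n + m) f (m - 1 - i')))"
      using G[unfolded Gprop_def, rule_format, OF X' gv_inj z'[rule_format] joinb_refl bt_le_refl r'] by blast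
    have "extn (n + m) f (m - 1 - i') = n + m - 1 - i" using i' by (simp add: extn_def)
    then show ?thesis using s'' sq(2) by (intro exI[of _ s'']) auto
  qed
  obtain sf where sf: "\<forall>i<n + m. Suc (sf i) \<le> S + p' \<and> esize (abstract_var (n + m - 1 - i) (Ms' ! i)) (sf i)
        \<and> betaeta_star (Ms' ! i) (Var (n + m - 1 - i))"
    using kids by metis
  define G where "G = extn (n + m) (gv (f j))"
  define Kids where "Kids = map (rename G) Ms'"
  have "extn (n + m) (gv (f j)) (n + m + f j) = n + m" by (simp add: extn_def gv_def)
  then have "beta_star (rename (gv (f j)) A') (absn (n + m) (apps (Var (n + m)) Kids))"
    using bs_rename[OF hA', of "gv (f j)"] by (simp add: rename_absn rename_apps Kids_def G_def)
  then have redX': "beta_star (abstract_var (f j) A') (absn (Suc (n + m)) (apps (Var (n + m)) Kids))"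
    by (simp add: abstract_var_gv absn_Suc bs_Abs)
  have kidsE: "\<forall>i<n + m. esize (abstract_var (n + m - 1 - i) (Kids ! i)) (map sf [0..<n + m] ! i)"
  proof (intro allI impI)
    fix i assume i: "i < n + m"
    define a where "a = n + m - 1 - i"
    have "esize (Abs (rename (gv a) (Ms' ! i))) (sf i)" using sf i by (simp add: abstract_var_gv a_def)
    then have "esize (Abs (rename (gv a \<circ> G) (Ms' ! i))) (sf i)"
      by (rule esize_AV[OF _ gv_inj]) (use i in \<open>auto simp: gv_def G_def extn_def a_def\<close>)
    then show "esize (abstract_var (n + m - 1 - i) (Kids ! i)) (map sf [0..<n + m] ! i)"
      using i lenMs' by (simp add: Kids_def abstract_var_gv rename_comp a_def)
  qed
  have lenK: "length Kids = n + m" using lenMs' by (simp add: Kids_def)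
  have eX: "esize (abstract_var (f j) A') (max (n + m) (Max (insert 0 (Suc ` set (map sf [0..<n + m])))))"
    by (rule esize.esize_exp[OF redX' lenK _ kidsE]) simp
  have bound: "max (n + m) (Max (insert 0 (Suc ` set (map sf [0..<n + m])))) \<le> S + p'"
  proof -
    have "n + m \<le> S + p'" using mp by (simp add: S_def)
    moreover have "Max (insert 0 (Suc ` set (map sf [0..<n + m]))) \<le> S + p'"
      using sf by (subst Max_le_iff) auto
    ultimately show ?thesis by simp
  qed
  have "list_all2 betaeta_star Ms' (map (\<lambda>i. Var (n + m - 1 - i)) [0..<n + m])"
    using sf lenMs' by (simp add: list_all2_conv_all_nth)
  then have "betaeta_star (absn (n + m) (apps (Var (n + m + f j)) Ms'))
      (absn (n + m) (apps (Var (n + m + f j)) (map (\<lambda>i. Var (n + m - 1 - i)) [0..<n + m])))"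
    by (intro bes_absn bes_apps)
  then have "betaeta_star A' (absn (n + m) (apps (Var (n + m + f j)) (map (\<lambda>i. Var (n + m - 1 - i)) [0..<n + m])))"
    using bes_trans[OF bes_of_bs[OF hA']] by blast
  then have bes': "betaeta_star A' (Var (f j))"
    using bes_trans[OF _ eta_exp_var] by blast
  have bound': "max (n + m) (Max (insert 0 (Suc ` set (map sf [0..<n + m])))) \<le> max n (Max (insert 0 (Suc ` set ss))) + p'"
    using bound by (simp only: S_def)
  show "\<exists>s'. s' \<le> max n (Max (insert 0 (Suc ` set ss))) + p' \<and> esize (abstract_var (f j) A') s' \<and>
        betaeta_star A' (Var (f j))"
    using eX bound' bes' by blast
qed




lemma G_all: "esize X s \<Longrightarrow> p' = 0 \<or> Tq \<Longrightarrow> Gprop p' X s"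
proof (induction rule: esize.induct)
  case (esize_id Q)
  have "Id_term = absn (Suc 0) (apps (Var 0) [])" by (simp add: Id_term_def absn_Suc)
  then have "Gprop p' Q (max 0 (Max (insert 0 (Suc ` set ([]::nat list)))))"
    using esize_id by (intro core[where Qs="[]"]) auto
  then show ?case by simp
next
  case (esize_exp Q m Qs ss)
  then show ?case by (intro core) auto
qed

lemma Tq_holds: Tq
  unfolding Tq_def using G_all by blast

lemma G: "esize X s \<Longrightarrow> Gprop p' X s"
  using G_all Tq_holds by blast

theorem mainTheorem16:
  fixes p p' :: nat and Q Q' :: lterm
  assumes "Abs Q \<in> E_p p"
    and "bt_le_eta p' (BT Q) (BT Q')"
  shows "Abs Q' \<in> E_p (p + p')"
proof -
  obtain s where s: "esize (Abs Q) s" "s < p" using assms(1) by (auto simp: E_p_def)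
  have X: "Abs Q = Abs (rename id Q)" by simp
  have "\<forall>k. id k = (0::nat) \<longleftrightarrow> k = 0" by simp
  moreover have "BT Q' = ren_bt id (BT Q')" by (simp add: ren_id)
  ultimately obtain s' where s': "s' \<le> s + p'" "esize (abstract_var (id 0) Q') s'"
      "betaeta_star Q' (Var (id 0))"
    using G[OF s(1), of p', unfolded Gprop_def, rule_format, OF X inj_on_id _ joinb_refl assms(2)]
    by blast
  have "esize (Abs (rename (gv 0) Q')) s'" using s'(2) by (simp add: abstract_var_gv)
  then have "esize (Abs (rename id Q')) s'"
    by (rule esize_AV[OF _ gv_inj]) (simp add: gv_0)
  then have e: "esize (Abs Q') s'" by simp
  have "betaeta_star (Abs Q') Id_term" using bes_Abs[OF s'(3)] by (simp add: Id_term_def)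
  then show ?thesis using e s' s(2) by (auto simp: E_p_def E_def)
qed


end
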